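(* Let $\mathbb{F}$ be an infinite field with $\operatorname{char}(\mathbb{F})\neq 2$ and let $G$ be a non-abelian group with a group involution $\ast$ and a non-trivial orientation $\sigma:G\to\{\pm1\}$ such that $gg^\ast\in N=\ker\sigma$ for all $g\in G$. Suppose $\mathbb{F}G$ is normal with respect to the oriented involution $\circledast$ and that $N$, with the restriction of $\ast$, is an SLC-group with unique non-identity commutator $s$. Then $G$ is an LC-group and $\ast$ is given by $g^\ast=g$ if $g\in N\cap\zeta(G)$ or $g\in(G\setminus N)\setminus\zeta(G)$, and $g^\ast=sg$ otherwise.
   Context: A group involution on $G$ is a map $\ast:G\to G$ with $(gh)^\ast=h^\ast g^\ast$ and $(g^\ast)^\ast=g$. An orientation is a group homomorphism $\sigma:G\to\{\pm1\}$. The oriented involution is $(\sum_g\alpha_g g)^\circledast=\sum_g\alpha_g\sigma(g)g^\ast$ on $\mathbb{F}G$. $\mathbb{F}G$ is normal if $\alpha\alpha^\circledast=\alpha^\circledast\alpha$ for all $\alpha\in\mathbb{F}G$. $\zeta(G)$ is the center of $G$, $(g,h)=g^{-1}h^{-1}gh$. A group $H$ is an LC-group if it is non-abelian and for all $g,h\in H$: $gh=hg$ iff at least one of $g,h,gh$ is in $\zeta(H)$. $H$ with involution $\ast$ is an SLC-group if it is an LC-group with a unique non-identity commutator $s$ (i.e. $\{(g,h):g,h\in H\}=\{1,s\}$) and $h^\ast=h$ for $h\in\zeta(H)$, $h^\ast=sh$ for $h\notin\zeta(H)$. *)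

theory Defs
  imports "HOL-Algebra.Group"
begin

definition group_involution :: "('g, 'b) monoid_scheme \<Rightarrow> ('g \<Rightarrow> 'g) \<Rightarrow> bool" where
  "group_involution G iv \<longleftrightarrow>
     (\<forall>g\<in>carrier G. iv g \<in> carrier G) \<and>
     (\<forall>g\<in>carrier G. \<forall>h\<in>carrier G. iv (g \<otimes>\<^bsub>G\<^esub> h) = iv h \<otimes>\<^bsub>G\<^esub> iv g) \<and>
     (\<forall>g\<in>carrier G. iv (iv g) = g)"

definition orientation :: "('g, 'b) monoid_scheme \<Rightarrow> ('g \<Rightarrow> int) \<Rightarrow> bool" where
  "orientation G \<sigma> \<longleftrightarrow>
     (\<forall>g\<in>carrier G. \<sigma> g = 1 \<or> \<sigma> g = -1) \<and>
     (\<forall>g\<in>carrier G. \<forall>h\<in>carrier G. \<sigma> (g \<otimes>\<^bsub>G\<^esub> h) = \<sigma> g * \<sigma> h)"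

definition orient_kernel :: "('g, 'b) monoid_scheme \<Rightarrow> ('g \<Rightarrow> int) \<Rightarrow> 'g set" where
  "orient_kernel G \<sigma> = {g \<in> carrier G. \<sigma> g = 1}"

definition grp_center :: "('g, 'b) monoid_scheme \<Rightarrow> 'g set" where
  "grp_center G = {g \<in> carrier G. \<forall>h\<in>carrier G. g \<otimes>\<^bsub>G\<^esub> h = h \<otimes>\<^bsub>G\<^esub> g}"

definition grp_comm :: "('g, 'b) monoid_scheme \<Rightarrow> 'g \<Rightarrow> 'g \<Rightarrow> 'g" where
  "grp_comm G g h = inv\<^bsub>G\<^esub> g \<otimes>\<^bsub>G\<^esub> inv\<^bsub>G\<^esub> h \<otimes>\<^bsub>G\<^esub> g \<otimes>\<^bsub>G\<^esub> h"

definition non_abelian :: "('g, 'b) monoid_scheme \<Rightarrow> bool" where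
  "non_abelian G \<longleftrightarrow> (\<exists>g\<in>carrier G. \<exists>h\<in>carrier G. g \<otimes>\<^bsub>G\<^esub> h \<noteq> h \<otimes>\<^bsub>G\<^esub> g)"

definition LC_group :: "('g, 'b) monoid_scheme \<Rightarrow> bool" where
  "LC_group H \<longleftrightarrow> non_abelian H \<and>
     (\<forall>g\<in>carrier H. \<forall>h\<in>carrier H.
        g \<otimes>\<^bsub>H\<^esub> h = h \<otimes>\<^bsub>H\<^esub> g \<longleftrightarrow>
        (g \<in> grp_center H \<or> h \<in> grp_center H \<or> g \<otimes>\<^bsub>H\<^esub> h \<in> grp_center H))"

definition SLC_group :: "('g, 'b) monoid_scheme \<Rightarrow> ('g \<Rightarrow> 'g) \<Rightarrow> 'g \<Rightarrow> bool" where
  "SLC_group H star s \<longleftrightarrow>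
     group_involution H star \<and> LC_group H \<and> s \<noteq> \<one>\<^bsub>H\<^esub> \<and>
     {grp_comm H g h | g h. g \<in> carrier H \<and> h \<in> carrier H} = {\<one>\<^bsub>H\<^esub>, s} \<and>
     (\<forall>h\<in>carrier H. star h = (if h \<in> grp_center H then h else s \<otimes>\<^bsub>H\<^esub> h))"

definition grp_alg :: "('g, 'b) monoid_scheme \<Rightarrow> ('g \<Rightarrow> 'f::field) set" where
  "grp_alg G = {a. finite {g. a g \<noteq> 0} \<and> (\<forall>g. g \<notin> carrier G \<longrightarrow> a g = 0)}"

definition grp_alg_mult :: "('g, 'b) monoid_scheme \<Rightarrow> ('g \<Rightarrow> 'f::field) \<Rightarrow> ('g \<Rightarrow> 'f) \<Rightarrow> 'g \<Rightarrow> 'f" where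
  "grp_alg_mult G a b = (\<lambda>x. if x \<in> carrier G
      then (\<Sum>g\<in>{g. a g \<noteq> 0}. a g * b (inv\<^bsub>G\<^esub> g \<otimes>\<^bsub>G\<^esub> x)) else 0)"

text \<open>Oriented involution: (sum a_g g) \<mapsto> sum a_g \<sigma>(g) g*; the coefficient at x is a_(x*) \<sigma>(x*).\<close>
definition oriented_inv :: "('g, 'b) monoid_scheme \<Rightarrow> ('g \<Rightarrow> int) \<Rightarrow> ('g \<Rightarrow> 'g) \<Rightarrow> ('g \<Rightarrow> 'f::field) \<Rightarrow> 'g \<Rightarrow> 'f" where
  "oriented_inv G \<sigma> star a = (\<lambda>x. if x \<in> carrier G then of_int (\<sigma> (star x)) * a (star x) else 0)"

definition grp_alg_normal :: "'f::field itself \<Rightarrow> ('g, 'b) monoid_scheme \<Rightarrow> ('g \<Rightarrow> int) \<Rightarrow> ('g \<Rightarrow> 'g) \<Rightarrow> bool" where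
  "grp_alg_normal TYPE('f) G \<sigma> star \<longleftrightarrow>
     (\<forall>a \<in> (grp_alg G :: ('g \<Rightarrow> 'f) set).
        grp_alg_mult G a (oriented_inv G \<sigma> star a) = grp_alg_mult G (oriented_inv G \<sigma> star a) a)"

end

theory Submission
  imports Defs
begin

lemma msnat:
  assumes E: "\<forall>x\<in>{a,b,c,d}. (if x=a then 1 else 0) + (if x=b then 1 else 0) = (if x=c then 1 else 0) + (if x=d then (1::nat) else 0)"
  shows "(a=c\<and>b=d) \<or> (a=d\<and>b=c)"
  using E
  by (cases "a=b"; cases "a=c"; cases "a=d"; cases "b=c"; cases "b=d"; cases "c=d"; simp)

lemma inj2:
  assumes two: "(2::'f::field) \<noteq> 0" and "m \<le> 2" "n \<le> 2" and "(of_nat m::'f) = of_nat n"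
  shows "m = n"
proof -
  have "m \<in> {0,1,2}" "n \<in> {0,1,2}" using assms by auto
  moreover have "(1::'f) \<noteq> 2" using two by (metis add_cancel_left_right one_add_one zero_neq_one)
  ultimately show ?thesis using assms(4) two by auto
qed

lemma ind_le: "(if P then 1 else 0) + (if Q then 1 else (0::nat)) \<le> 2" by auto

lemma comb:
  fixes p q :: "'f::field" and a b c d :: 'g
  assumes two: "(2::'f) \<noteq> 0" and p: "p = 1 \<or> p = -1" and q: "q = 1 \<or> q = -1"
    and E: "\<forall>x\<in>{a,b,c,d}. (if x=a then q else 0) + (if x=b then p else 0) = (if x=c then p else 0) + (if x=d then q else 0)"
  shows "(p = q \<longrightarrow> (a=c\<and>b=d) \<or> (a=d\<and>b=c)) \<and> (p \<noteq> q \<longrightarrow> (a=b\<and>c=d) \<or> (a=d\<and>c=b))"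
proof -
  have q0: "q \<noteq> 0" using q by auto
  have rw: "\<And>P Q. (if P then q else 0) + (if Q then q else 0) = q * of_nat ((if P then 1 else 0) + (if Q then 1 else 0))"
    by simp
  have A: "p = q \<longrightarrow> (a=c\<and>b=d) \<or> (a=d\<and>b=c)"
  proof
    assume pq: "p = q"
    show "(a=c\<and>b=d) \<or> (a=d\<and>b=c)"
    proof (rule msnat, intro ballI)
      fix x assume x: "x \<in> {a,b,c,d}"
      have "q * of_nat ((if x=a then 1 else 0) + (if x=b then 1 else 0)) = q * (of_nat ((if x=c then 1 else 0) + (if x=d then 1 else 0))::'f)"
        using E x pq by (simp only: rw[symmetric])
      then have "(of_nat ((if x=a then 1 else 0) + (if x=b then 1 else 0))::'f) = of_nat ((if x=c then 1 else 0) + (if x=d then 1 else 0))"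
        using q0 by simp
      then show "(if x=a then 1 else 0) + (if x=b then 1 else 0) = (if x=c then 1 else 0) + (if x=d then (1::nat) else 0)"
        using inj2[OF two ind_le ind_le] by blast
    qed
  qed
  have B: "p \<noteq> q \<longrightarrow> (a=b\<and>c=d) \<or> (a=d\<and>c=b)"
  proof
    assume pq: "p \<noteq> q"
    then have pq': "p = - q" using p q by auto
    show "(a=b\<and>c=d) \<or> (a=d\<and>c=b)"
    proof (rule msnat, intro ballI)
      fix x assume x: "x \<in> {a,c,b,d}"
      have e: "(if x=a then q else 0) + (if x=b then -q else 0) = (if x=c then -q else 0) + (if x=d then q else 0)"
        using E x pq' by auto
      have "(if x=a then q else 0) + (if x=c then q else 0) = (if x=b then q else 0) + (if x=d then q else 0)"
      proof -
        have n1: "(if x=b then -q else 0) = - (if x=b then q else 0)" "(if x=c then -q else 0) = - (if x=c then q else 0)" by auto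
        show ?thesis using e unfolding n1 by (simp add: algebra_simps)
      qed
      then have "q * of_nat ((if x=a then 1 else 0) + (if x=c then 1 else 0)) = q * (of_nat ((if x=b then 1 else 0) + (if x=d then 1 else 0))::'f)"
        by (simp only: rw[symmetric])
      then have "(of_nat ((if x=a then 1 else 0) + (if x=c then 1 else 0))::'f) = of_nat ((if x=b then 1 else 0) + (if x=d then 1 else 0))"
        using q0 by simp
      then show "(if x=a then 1 else 0) + (if x=c then 1 else 0) = (if x=b then 1 else 0) + (if x=d then (1::nat) else 0)"
        using inj2[OF two ind_le ind_le] by blast
    qed
  qed
  show ?thesis using A B by blast
qed

lemma normal_eq:
  fixes G (structure) and star :: "'g \<Rightarrow> 'g" and \<sigma> :: "'g \<Rightarrow> int"
  assumes grp: "group G" and gi: "group_involution G star" and ori: "orientation G \<sigma>"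
   and sig: "\<forall>g\<in>carrier G. \<sigma> (star g) = \<sigma> g"
   and nrm: "grp_alg_normal TYPE('f::field) G \<sigma> star"
   and S: "S \<subseteq> carrier G" "finite S" and x: "x \<in> carrier G"
  shows "(\<Sum>y\<in>S. \<Sum>w\<in>S. if x = y \<otimes> star w then (of_int (\<sigma> w)::'f) else 0)
       = (\<Sum>y\<in>S. \<Sum>w\<in>S. if x = star y \<otimes> w then of_int (\<sigma> y) else 0)"
proof -
  interpret group G by fact
  have sc: "\<And>g. g \<in> carrier G \<Longrightarrow> star g \<in> carrier G" and ss: "\<And>g. g \<in> carrier G \<Longrightarrow> star (star g) = g"
    using gi unfolding group_involution_def by auto
  have snz: "\<And>g. g \<in> carrier G \<Longrightarrow> (of_int (\<sigma> g) :: 'f) \<noteq> 0"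
    using ori unfolding orientation_def by force
  define \<alpha> where "\<alpha> = (\<lambda>z. if z \<in> S then (1::'f) else 0)"
  define \<beta> where "\<beta> = oriented_inv G \<sigma> star \<alpha>"
  have sup: "{z. \<alpha> z \<noteq> 0} = S" by (auto simp: \<alpha>_def)
  have "\<alpha> \<in> grp_alg G" using S unfolding grp_alg_def \<alpha>_def by auto
  with nrm have E: "grp_alg_mult G \<alpha> \<beta> x = grp_alg_mult G \<beta> \<alpha> x"
    unfolding grp_alg_normal_def \<beta>_def by auto
  have sup2: "{z. \<beta> z \<noteq> 0} = star ` S"
  proof
    show "{z. \<beta> z \<noteq> 0} \<subseteq> star ` S"
    proof
      fix z assume "z \<in> {z. \<beta> z \<noteq> 0}"
      then have "z \<in> carrier G" "star z \<in> S" by (auto simp: \<beta>_def oriented_inv_def \<alpha>_def split: if_splits)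
      then show "z \<in> star ` S" using ss by (metis image_eqI)
    qed
    show "star ` S \<subseteq> {z. \<beta> z \<noteq> 0}"
      using S by (auto simp: \<beta>_def oriented_inv_def \<alpha>_def ss sc snz)
  qed
  have L: "grp_alg_mult G \<alpha> \<beta> x = (\<Sum>y\<in>S. \<Sum>w\<in>S. if x = y \<otimes> star w then (of_int (\<sigma> w)::'f) else 0)"
    unfolding grp_alg_mult_def sup using x
  proof (simp, intro sum.cong refl)
    fix y assume y: "y \<in> S"
    have yc: "y \<in> carrier G" using y S by auto
    have "(\<Sum>w\<in>S. if x = y \<otimes> star w then (of_int (\<sigma> w)::'f) else 0)
        = (\<Sum>w\<in>S. if w = star (inv y \<otimes> x) then (of_int (\<sigma> w)::'f) else 0)"
    proof (rule sum.cong[OF refl])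
      fix w assume "w \<in> S"
      then have wc: "w \<in> carrier G" using S by auto
      have "x = y \<otimes> star w \<longleftrightarrow> star w = inv y \<otimes> x"
        using yc wc x sc by (metis inv_solve_left)
      also have "\<dots> \<longleftrightarrow> w = star (inv y \<otimes> x)" using ss sc wc yc x by (metis inv_closed m_closed)
      finally show "(if x = y \<otimes> star w then (of_int (\<sigma> w)::'f) else 0) = (if w = star (inv y \<otimes> x) then of_int (\<sigma> w) else 0)" by simp
    qed
    also have "\<dots> = (if star (inv y \<otimes> x) \<in> S then of_int (\<sigma> (star (inv y \<otimes> x))) else 0)"
      using S by (simp add: sum.delta')
    finally show "\<alpha> y * \<beta> (inv y \<otimes> x) = (\<Sum>w\<in>S. if x = y \<otimes> star w then (of_int (\<sigma> w)::'f) else 0)"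
      using y yc x by (simp add: \<alpha>_def \<beta>_def oriented_inv_def)
  qed
  have R: "grp_alg_mult G \<beta> \<alpha> x = (\<Sum>y\<in>S. \<Sum>w\<in>S. if x = star y \<otimes> w then (of_int (\<sigma> y)::'f) else 0)"
  proof -
    have inj: "inj_on star S" using ss S by (metis inj_on_def subsetD)
    have "grp_alg_mult G \<beta> \<alpha> x = (\<Sum>z\<in>star ` S. \<beta> z * \<alpha> (inv z \<otimes> x))"
      unfolding grp_alg_mult_def sup2 using x by simp
    also have "\<dots> = (\<Sum>y\<in>S. \<beta> (star y) * \<alpha> (inv (star y) \<otimes> x))"
      by (simp add: sum.reindex[OF inj])
    also have "\<dots> = (\<Sum>y\<in>S. \<Sum>w\<in>S. if x = star y \<otimes> w then (of_int (\<sigma> y)::'f) else 0)"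
    proof (rule sum.cong[OF refl])
      fix y assume y: "y \<in> S"
      have yc: "y \<in> carrier G" using y S by auto
      have "(\<Sum>w\<in>S. if x = star y \<otimes> w then (of_int (\<sigma> y)::'f) else 0)
          = (\<Sum>w\<in>S. if w = inv (star y) \<otimes> x then (of_int (\<sigma> y)::'f) else 0)"
      proof (rule sum.cong[OF refl])
        fix w assume "w \<in> S"
        then have wc: "w \<in> carrier G" using S by auto
        have "x = star y \<otimes> w \<longleftrightarrow> w = inv (star y) \<otimes> x"
          using yc wc x sc by (metis inv_solve_left)
        then show "(if x = star y \<otimes> w then (of_int (\<sigma> y)::'f) else 0) = (if w = inv (star y) \<otimes> x then of_int (\<sigma> y) else 0)" by simp
      qed
      also have "\<dots> = (if inv (star y) \<otimes> x \<in> S then of_int (\<sigma> y) else 0)"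
        using S by (simp add: sum.delta')
      finally show "\<beta> (star y) * \<alpha> (inv (star y) \<otimes> x) = (\<Sum>w\<in>S. if x = star y \<otimes> w then (of_int (\<sigma> y)::'f) else 0)"
        using y yc x sc ss sig by (simp add: \<alpha>_def \<beta>_def oriented_inv_def)
    qed
    finally show ?thesis .
  qed
  show ?thesis using E L R by simp
qed


lemma normal_single:
  fixes G (structure) and star :: "'g \<Rightarrow> 'g" and \<sigma> :: "'g \<Rightarrow> int"
  assumes grp: "group G" and gi: "group_involution G star" and ori: "orientation G \<sigma>"
   and sig: "\<forall>g\<in>carrier G. \<sigma> (star g) = \<sigma> g"
   and nrm: "grp_alg_normal TYPE('f::field) G \<sigma> star" and g: "g \<in> carrier G"
  shows "g \<otimes> star g = star g \<otimes> g"
proof -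
  interpret group G by fact
  have sc: "star g \<in> carrier G" using gi g unfolding group_involution_def by auto
  have snz: "(of_int (\<sigma> g) :: 'f) \<noteq> 0"
    using ori g unfolding orientation_def by force
  have "(\<Sum>y\<in>{g}. \<Sum>w\<in>{g}. if g \<otimes> star g = y \<otimes> star w then (of_int (\<sigma> w)::'f) else 0)
       = (\<Sum>y\<in>{g}. \<Sum>w\<in>{g}. if g \<otimes> star g = star y \<otimes> w then of_int (\<sigma> y) else 0)"
    by (rule normal_eq[OF grp gi ori sig nrm]) (use g sc in auto)
  then show ?thesis using snz by (simp split: if_splits)
qed

lemma normal_pair:
  fixes G (structure) and star :: "'g \<Rightarrow> 'g" and \<sigma> :: "'g \<Rightarrow> int"
  assumes grp: "group G" and gi: "group_involution G star" and ori: "orientation G \<sigma>"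
   and sig: "\<forall>g\<in>carrier G. \<sigma> (star g) = \<sigma> g"
   and nrm: "grp_alg_normal TYPE('f::field) G \<sigma> star" and two: "(2::'f) \<noteq> 0"
   and g: "g \<in> carrier G" and h: "h \<in> carrier G" and gh: "g \<noteq> h"
  shows "(\<sigma> g = \<sigma> h \<longrightarrow> (g \<otimes> star h = star g \<otimes> h \<and> h \<otimes> star g = star h \<otimes> g) \<or> (g \<otimes> star h = star h \<otimes> g \<and> h \<otimes> star g = star g \<otimes> h))
       \<and> (\<sigma> g \<noteq> \<sigma> h \<longrightarrow> (g \<otimes> star h = h \<otimes> star g \<and> star g \<otimes> h = star h \<otimes> g) \<or> (g \<otimes> star h = star h \<otimes> g \<and> star g \<otimes> h = h \<otimes> star g))"
proof -
  interpret group G by fact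
  have sc: "\<And>g. g \<in> carrier G \<Longrightarrow> star g \<in> carrier G"
    using gi unfolding group_involution_def by auto
  have A1: "g \<otimes> star g = star g \<otimes> g" by (rule normal_single[OF grp gi ori sig nrm g])
  have A2: "h \<otimes> star h = star h \<otimes> h" by (rule normal_single[OF grp gi ori sig nrm h])
  have pm: "\<And>k. k \<in> carrier G \<Longrightarrow> (of_int (\<sigma> k) :: 'f) = 1 \<or> of_int (\<sigma> k) = -1"
    using ori unfolding orientation_def by force
  have E: "\<forall>x\<in>{g \<otimes> star h, h \<otimes> star g, star g \<otimes> h, star h \<otimes> g}.
     (if x = g \<otimes> star h then (of_int (\<sigma> h)::'f) else 0) + (if x = h \<otimes> star g then of_int (\<sigma> g) else 0)
   = (if x = star g \<otimes> h then of_int (\<sigma> g) else 0) + (if x = star h \<otimes> g then of_int (\<sigma> h) else 0)"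
  proof
    fix x assume "x \<in> {g \<otimes> star h, h \<otimes> star g, star g \<otimes> h, star h \<otimes> g}"
    then have x: "x \<in> carrier G" using g h sc by auto
    have "(\<Sum>y\<in>{g,h}. \<Sum>w\<in>{g,h}. if x = y \<otimes> star w then (of_int (\<sigma> w)::'f) else 0)
       = (\<Sum>y\<in>{g,h}. \<Sum>w\<in>{g,h}. if x = star y \<otimes> w then of_int (\<sigma> y) else 0)"
      by (rule normal_eq[OF grp gi ori sig nrm]) (use g h x in auto)
    then show "(if x = g \<otimes> star h then (of_int (\<sigma> h)::'f) else 0) + (if x = h \<otimes> star g then of_int (\<sigma> g) else 0)
   = (if x = star g \<otimes> h then of_int (\<sigma> g) else 0) + (if x = star h \<otimes> g then of_int (\<sigma> h) else 0)"
      using gh by (simp add: A1 A2 algebra_simps)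
  qed
  have f1: "(1::'f) \<noteq> -1" using two by (metis add_eq_0_iff one_add_one)
  have "\<sigma> g = 1 \<or> \<sigma> g = -1" "\<sigma> h = 1 \<or> \<sigma> h = -1" using ori g h unfolding orientation_def by auto
  then have inj: "(of_int (\<sigma> g)::'f) = of_int (\<sigma> h) \<longleftrightarrow> \<sigma> g = \<sigma> h" using f1 by auto
  from comb[OF two pm[OF g] pm[OF h] E] show ?thesis unfolding inj by simp
qed

locale P1 = group G for G (structure) +
  fixes star :: "'a \<Rightarrow> 'a" and \<sigma> :: "'a \<Rightarrow> int" and s :: 'a
  assumes gi: "group_involution G star"
    and ori: "orientation G \<sigma>"
    and t0: "\<exists>g\<in>carrier G. \<sigma> g = -1"
    and kern: "\<forall>g\<in>carrier G. g \<otimes> star g \<in> orient_kernel G \<sigma>"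
    and slc: "SLC_group (G\<lparr>carrier := orient_kernel G \<sigma>\<rparr>) star s"
    and factA: "\<forall>g\<in>carrier G. g \<otimes> star g = star g \<otimes> g"
    and pair: "\<forall>g\<in>carrier G. \<forall>h\<in>carrier G. g \<noteq> h \<longrightarrow>
       (\<sigma> g = \<sigma> h \<longrightarrow> (g \<otimes> star h = star g \<otimes> h \<and> h \<otimes> star g = star h \<otimes> g) \<or> (g \<otimes> star h = star h \<otimes> g \<and> h \<otimes> star g = star g \<otimes> h))
       \<and> (\<sigma> g \<noteq> \<sigma> h \<longrightarrow> (g \<otimes> star h = h \<otimes> star g \<and> star g \<otimes> h = star h \<otimes> g) \<or> (g \<otimes> star h = star h \<otimes> g \<and> star g \<otimes> h = h \<otimes> star g))"
begin

abbreviation "N \<equiv> orient_kernel G \<sigma>"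
abbreviation "H \<equiv> G\<lparr>carrier := N\<rparr>"
abbreviation "Z \<equiv> grp_center G"

lemma cancel1 [simp]: "x \<in> carrier G \<Longrightarrow> y \<in> carrier G \<Longrightarrow> x \<otimes> (inv x \<otimes> y) = y"
  by (metis inv_closed l_one m_assoc r_inv)
lemma cancel2 [simp]: "x \<in> carrier G \<Longrightarrow> y \<in> carrier G \<Longrightarrow> inv x \<otimes> (x \<otimes> y) = y"
  by (metis inv_closed l_one m_assoc l_inv)

lemma sc [simp]: "g \<in> carrier G \<Longrightarrow> star g \<in> carrier G"
  using gi unfolding group_involution_def by auto
lemma ss [simp]: "g \<in> carrier G \<Longrightarrow> star (star g) = g"
  using gi unfolding group_involution_def by auto
lemma smul: "g \<in> carrier G \<Longrightarrow> h \<in> carrier G \<Longrightarrow> star (g \<otimes> h) = star h \<otimes> star g"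
  using gi unfolding group_involution_def by auto

lemma sig_pm: "g \<in> carrier G \<Longrightarrow> \<sigma> g = 1 \<or> \<sigma> g = -1"
  using ori unfolding orientation_def by auto
lemma sig_mult: "g \<in> carrier G \<Longrightarrow> h \<in> carrier G \<Longrightarrow> \<sigma> (g \<otimes> h) = \<sigma> g * \<sigma> h"
  using ori unfolding orientation_def by auto
lemma sig_one: "\<sigma> \<one> = 1"
  using sig_mult[of \<one> \<one>] sig_pm[of \<one>] by auto
lemma sig_inv: "g \<in> carrier G \<Longrightarrow> \<sigma> (inv g) = \<sigma> g"
  using sig_mult[of g "inv g"] sig_pm[of g] sig_pm[of "inv g"] sig_one by auto
lemma sig_star: "g \<in> carrier G \<Longrightarrow> \<sigma> (star g) = \<sigma> g"
  using kern sig_mult[of g "star g"] sig_pm[of g] sig_pm[of "star g"]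
  unfolding orient_kernel_def by auto

lemma inN: "g \<in> N \<longleftrightarrow> g \<in> carrier G \<and> \<sigma> g = 1"
  unfolding orient_kernel_def by auto
lemma notN: "g \<in> carrier G \<Longrightarrow> g \<notin> N \<longleftrightarrow> \<sigma> g = -1"
  using sig_pm[of g] inN by auto

lemma N_sub: "subgroup N G"
proof (rule subgroupI)
  show "N \<noteq> {}" using sig_one inN by auto
qed (auto simp: inN sig_mult sig_inv)

lemma inZ: "g \<in> Z \<longleftrightarrow> g \<in> carrier G \<and> (\<forall>h\<in>carrier G. g \<otimes> h = h \<otimes> g)"
  unfolding grp_center_def by auto

lemma inZH: "g \<in> grp_center H \<longleftrightarrow> g \<in> N \<and> (\<forall>h\<in>N. g \<otimes> h = h \<otimes> g)"
  unfolding grp_center_def by auto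

lemma LCH: "LC_group H" using slc unfolding SLC_group_def by auto
lemma s1: "s \<noteq> \<one>" using slc unfolding SLC_group_def by auto
lemma starN: "n \<in> N \<Longrightarrow> star n = (if n \<in> grp_center H then n else s \<otimes> n)"
  using slc unfolding SLC_group_def by auto

lemma comms: "{inv g \<otimes> inv h \<otimes> g \<otimes> h | g h. g \<in> N \<and> h \<in> N} = {\<one>, s}"
proof -
  have "{grp_comm H g h | g h. g \<in> N \<and> h \<in> N} = {\<one>, s}"
    using slc unfolding SLC_group_def by auto
  moreover have "\<And>g h. g \<in> N \<Longrightarrow> h \<in> N \<Longrightarrow> grp_comm H g h = inv g \<otimes> inv h \<otimes> g \<otimes> h"
    unfolding grp_comm_def using N_sub by simp
  ultimately show ?thesis by (smt (verit, best) Collect_cong)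
qed

lemma comm_in: "g \<in> N \<Longrightarrow> h \<in> N \<Longrightarrow> inv g \<otimes> inv h \<otimes> g \<otimes> h = \<one> \<or> inv g \<otimes> inv h \<otimes> g \<otimes> h = s"
  using comms by blast

lemma s_ex: "\<exists>g h. g \<in> N \<and> h \<in> N \<and> s = inv g \<otimes> inv h \<otimes> g \<otimes> h"
  using comms by blast

lemma Nc [simp]: "g \<in> N \<Longrightarrow> g \<in> carrier G" using inN by auto

lemma sN: "s \<in> N"
proof -
  obtain g h where "g \<in> N" "h \<in> N" "s = inv g \<otimes> inv h \<otimes> g \<otimes> h" using s_ex by blast
  then show ?thesis using N_sub by (simp add: subgroup.m_closed subgroup.m_inv_closed)
qed

lemma sC [simp]: "s \<in> carrier G" using sN by simp

lemma inv_s: "inv s = s"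
proof -
  obtain g h where gh: "g \<in> N" "h \<in> N" and sd: "s = inv g \<otimes> inv h \<otimes> g \<otimes> h" using s_ex by blast
  have gc: "g \<in> carrier G" "h \<in> carrier G" using gh by auto
  have "inv s = inv h \<otimes> inv g \<otimes> h \<otimes> g" using gc unfolding sd by (simp add: inv_mult_group m_assoc)
  then have "inv s = \<one> \<or> inv s = s" using comm_in[of h g] gh by auto
  then show ?thesis using s1 by (metis inv_inv one_closed sC inv_one)
qed

lemma ss1: "s \<otimes> s = \<one>" using inv_s by (metis r_inv sC)

lemma s_cent: "x \<in> carrier G \<Longrightarrow> x \<otimes> s = s \<otimes> x"
proof -
  assume x: "x \<in> carrier G"
  obtain g h where gh: "g \<in> N" "h \<in> N" and sd: "s = inv g \<otimes> inv h \<otimes> g \<otimes> h" using s_ex by blast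
  have gc: "g \<in> carrier G" "h \<in> carrier G" using gh by auto
  define g' where "g' = inv x \<otimes> g \<otimes> x"
  define h' where "h' = inv x \<otimes> h \<otimes> x"
  have g'N: "g' \<in> N" using gh x sig_pm[of x] unfolding g'_def by (auto simp: inN sig_mult sig_inv)
  have h'N: "h' \<in> N" using gh x sig_pm[of x] unfolding h'_def by (auto simp: inN sig_mult sig_inv)
  have "inv x \<otimes> s \<otimes> x = inv g' \<otimes> inv h' \<otimes> g' \<otimes> h'"
    unfolding g'_def h'_def sd using gc x by (simp add: inv_mult_group m_assoc)
  then have "inv x \<otimes> s \<otimes> x = \<one> \<or> inv x \<otimes> s \<otimes> x = s" using comm_in[OF g'N h'N] by auto
  moreover have "inv x \<otimes> s \<otimes> x \<noteq> \<one>"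
  proof
    assume "inv x \<otimes> s \<otimes> x = \<one>"
    then have "x \<otimes> (inv x \<otimes> s \<otimes> x) = x" using x by simp
    then have "s \<otimes> x = x" using x by (simp add: m_assoc)
    then show False using s1 x by simp
  qed
  ultimately have "inv x \<otimes> s \<otimes> x = s" by auto
  then have "x \<otimes> (inv x \<otimes> s \<otimes> x) = x \<otimes> s" by simp
  then show "x \<otimes> s = s \<otimes> x" using x by (simp add: m_assoc)
qed

lemma sZ: "s \<in> Z" using s_cent inZ by auto

lemma cent_test:
  assumes x: "x \<in> carrier G" and t: "t \<in> carrier G" "t \<notin> N" and xt: "x \<otimes> t = t \<otimes> x"
    and xN: "\<forall>n\<in>N. x \<otimes> n = n \<otimes> x"
  shows "x \<in> Z"
  unfolding inZ
proof (intro conjI ballI x)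
  fix g assume g: "g \<in> carrier G"
  show "x \<otimes> g = g \<otimes> x"
  proof (cases "g \<in> N")
    case True then show ?thesis using xN by auto
  next
    case False
    have "inv t \<otimes> g \<in> N" using False t g notN[of t] notN[of g] by (simp add: inN sig_mult sig_inv)
    then have c: "x \<otimes> (inv t \<otimes> g) = (inv t \<otimes> g) \<otimes> x" using xN by auto
    have "g = t \<otimes> (inv t \<otimes> g)" using t g by simp
    then have "x \<otimes> g = x \<otimes> t \<otimes> (inv t \<otimes> g)" using x t g by (metis m_assoc inv_closed m_closed)
    also have "\<dots> = t \<otimes> (x \<otimes> (inv t \<otimes> g))" using x t g xt by (simp add: m_assoc)
    also have "\<dots> = t \<otimes> (inv t \<otimes> g) \<otimes> x" using c x t g by (simp add: m_assoc)
    also have "\<dots> = g \<otimes> x" using t g by simp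
    finally show ?thesis .
  qed
qed

lemma star_Z: "z \<in> Z \<Longrightarrow> star z \<in> Z"
proof -
  assume z: "z \<in> Z"
  then have zc: "z \<in> carrier G" using inZ by auto
  show "star z \<in> Z" unfolding inZ
  proof (intro conjI ballI)
    show "star z \<in> carrier G" using zc by simp
    fix h assume h: "h \<in> carrier G"
    have "star z \<otimes> h = star z \<otimes> star (star h)" using h by simp
    also have "\<dots> = star (star h \<otimes> z)" using h zc by (simp add: smul)
    also have "\<dots> = star (z \<otimes> star h)" using z h inZ by auto
    also have "\<dots> = h \<otimes> star z" using h zc by (simp add: smul)
    finally show "star z \<otimes> h = h \<otimes> star z" .
  qed
qed

lemma ZH_Z: assumes zH: "z \<in> grp_center H" shows "z \<in> Z"
proof -
  have zN: "z \<in> N" and zcomm: "\<forall>n\<in>N. z \<otimes> n = n \<otimes> z" using zH inZH by auto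
  have zc: "z \<in> carrier G" using zN by simp
  have zs: "star z = z" using starN[OF zN] zH by simp
  obtain t where t: "t \<in> carrier G" "\<sigma> t = -1" using t0 by blast
  have sz: "\<sigma> z = 1" using zN inN by auto
  have tN: "t \<notin> N" using t notN by auto
  have zt: "z \<noteq> t" using sz t by auto
  have P1: "(z \<otimes> star t = t \<otimes> z \<and> z \<otimes> t = star t \<otimes> z) \<or> (z \<otimes> star t = star t \<otimes> z \<and> z \<otimes> t = t \<otimes> z)"
    using pair[rule_format, OF zc t(1) zt] sz t zs by auto
  define u where "u = t \<otimes> z"
  have uc: "u \<in> carrier G" using t zc u_def by simp
  have su: "\<sigma> u = -1" using t sz zc by (simp add: u_def sig_mult)
  have zu: "z \<noteq> u" using sz su by auto
  have stu: "star u = z \<otimes> star t" using t zc zs by (simp add: u_def smul)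
  have P2: "(z \<otimes> (z \<otimes> star t) = u \<otimes> z \<and> z \<otimes> u = (z \<otimes> star t) \<otimes> z) \<or> (z \<otimes> (z \<otimes> star t) = (z \<otimes> star t) \<otimes> z \<and> z \<otimes> u = u \<otimes> z)"
    using pair[rule_format, OF zc uc zu] sz su zs stu by auto
  have key: "z \<otimes> star t = star t \<otimes> z"
  proof (cases "z \<otimes> (z \<otimes> star t) = (z \<otimes> star t) \<otimes> z")
    case True
    then show ?thesis using zc t by (simp add: m_assoc)
  next
    case False
    then have "z \<otimes> u = (z \<otimes> star t) \<otimes> z" using P2 by auto
    then have "z \<otimes> (t \<otimes> z) = z \<otimes> (star t \<otimes> z)" using zc t by (simp add: u_def m_assoc)
    then have "t = star t" using zc t by simp
    then show ?thesis using P1 by auto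
  qed
  have "star t \<notin> N" using t notN sig_star by auto
  then show ?thesis using cent_test[OF zc sc[OF t(1)] _ key zcomm] by auto
qed

lemma Z_ZH: "z \<in> N \<Longrightarrow> z \<in> Z \<Longrightarrow> z \<in> grp_center H"
  using inZ inZH by auto

lemma starN2: "n \<in> N \<Longrightarrow> star n = (if n \<in> Z then n else s \<otimes> n)"
  using starN ZH_Z Z_ZH by metis

lemma zcomm: "a \<in> Z \<Longrightarrow> x \<in> carrier G \<Longrightarrow> x \<otimes> a = a \<otimes> x"
  using inZ by auto

lemma Zc: "a \<in> Z \<Longrightarrow> a \<in> carrier G" using inZ by auto

lemma noncomm_notZ: "m \<in> carrier G \<Longrightarrow> n \<in> carrier G \<Longrightarrow> m \<otimes> n \<noteq> n \<otimes> m \<Longrightarrow> m \<notin> Z"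
  using inZ by auto

lemma claim2:
  assumes t: "t \<in> carrier G" "t \<notin> N" "t \<in> Z"
  shows "star t = s \<otimes> t"
proof -
  have "non_abelian H" using LCH unfolding LC_group_def by auto
  then obtain m n where mn: "m \<in> N" "n \<in> N" "m \<otimes> n \<noteq> n \<otimes> m"
    unfolding non_abelian_def by auto
  have mc: "m \<in> carrier G" and nc: "n \<in> carrier G" using mn by auto
  have "inv m \<otimes> inv n \<otimes> m \<otimes> n \<noteq> \<one>"
  proof
    assume "inv m \<otimes> inv n \<otimes> m \<otimes> n = \<one>"
    then have "n \<otimes> m \<otimes> (inv m \<otimes> inv n \<otimes> m \<otimes> n) = n \<otimes> m" using mc nc by simp
    then have "m \<otimes> n = n \<otimes> m" using mc nc by (simp add: m_assoc)
    then show False using mn by simp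
  qed
  then have cm: "inv m \<otimes> inv n \<otimes> m \<otimes> n = s" using comm_in[OF mn(1,2)] by auto
  have mnr: "m \<otimes> n = n \<otimes> m \<otimes> s"
  proof -
    have "n \<otimes> m \<otimes> (inv m \<otimes> inv n \<otimes> m \<otimes> n) = m \<otimes> n" using mc nc by (simp add: m_assoc)
    then show ?thesis using cm by simp
  qed
  have mZ: "m \<notin> Z" using noncomm_notZ[OF mc nc mn(3)] .
  have nZ: "n \<notin> Z" using noncomm_notZ[OF nc mc] mn(3) by metis
  have sm: "star m = s \<otimes> m" using starN2[OF mn(1)] mZ by simp
  have sn: "star n = s \<otimes> n" using starN2[OF mn(2)] nZ by simp
  define t' where "t' = star t"
  have t'Z: "t' \<in> Z" using star_Z[OF t(3)] t'_def by simp
  have t'c: "t' \<in> carrier G" using t'Z Zc by auto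
  define u where "u = t \<otimes> m"
  have uc: "u \<in> carrier G" using t mc u_def by simp
  have su: "\<sigma> u = -1" using t mn(1) notN[of t] inN by (simp add: u_def sig_mult)
  have sgn: "\<sigma> n = 1" using mn inN by auto
  have nu: "n \<noteq> u" using sgn su by auto
  have stu: "star u = (s \<otimes> m) \<otimes> t'" using t mc sm by (simp add: u_def smul t'_def)
  have P: "(n \<otimes> star u = u \<otimes> star n \<and> star n \<otimes> u = star u \<otimes> n) \<or> (n \<otimes> star u = star u \<otimes> n \<and> star n \<otimes> u = u \<otimes> star n)"
    using pair[rule_format, OF nc uc nu] sgn su by auto
  have ns: "n \<otimes> s = s \<otimes> n" using zcomm[OF sZ nc] .
  have L: "n \<otimes> star u = s \<otimes> (n \<otimes> m) \<otimes> t'"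
    unfolding stu using mc nc t'c by (simp add: m_assoc[symmetric] ns)
  show ?thesis
  proof (cases "n \<otimes> star u = star u \<otimes> n")
    case True
    have t'n: "t' \<otimes> n = n \<otimes> t'" using zcomm[OF t'Z nc] by simp
    have "star u \<otimes> n = s \<otimes> (m \<otimes> n) \<otimes> t'"
      unfolding stu using mc nc t'c by (simp add: m_assoc t'n)
    then have "s \<otimes> (n \<otimes> m) \<otimes> t' = s \<otimes> (m \<otimes> n) \<otimes> t'" using True L by simp
    then have "n \<otimes> m = m \<otimes> n" using mc nc t'c by simp
    then show ?thesis using mn(3) by simp
  next
    case False
    then have E: "n \<otimes> star u = u \<otimes> star n" using P by auto
    have tnm: "t \<otimes> (n \<otimes> m) = (n \<otimes> m) \<otimes> t" using zcomm[OF t(3), of "n \<otimes> m"] mc nc by simp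
    have "u \<otimes> star n = s \<otimes> (t \<otimes> (m \<otimes> n))"
      unfolding sn u_def using mc nc t by (simp add: m_assoc[symmetric] zcomm[OF sZ])
    also have "\<dots> = s \<otimes> ((n \<otimes> m) \<otimes> (t \<otimes> s))"
      unfolding mnr using mc nc t by (simp add: m_assoc[symmetric] tnm)
    finally have "s \<otimes> (n \<otimes> m) \<otimes> t' = s \<otimes> ((n \<otimes> m) \<otimes> (t \<otimes> s))" using E L by simp
    then have "t' = t \<otimes> s" using mc nc t t'c by (simp add: m_assoc)
    then show ?thesis using zcomm[OF sZ t(1)] t'_def by simp
  qed
qed

lemma s_s_x: "x \<in> carrier G \<Longrightarrow> s \<otimes> (s \<otimes> x) = x"
  using ss1 by (simp add: m_assoc[symmetric])

lemma claim4:
  assumes t: "t \<in> carrier G" "t \<notin> N" "t \<notin> Z"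
  shows "star t = t"
proof -
  obtain n where n: "n \<in> N" "t \<otimes> n \<noteq> n \<otimes> t"
    using cent_test[OF t(1) t(1) t(2) refl] t(3) by metis
  have nc: "n \<in> carrier G" using n by simp
  have nZ: "n \<notin> Z" using noncomm_notZ[OF nc t(1)] n(2) by metis
  have sn: "star n = s \<otimes> n" using starN2[OF n(1)] nZ by simp
  define t' where "t' = star t"
  have t'c: "t' \<in> carrier G" using t t'_def by simp
  have tt': "t \<otimes> t' = t' \<otimes> t" using factA t unfolding t'_def by auto
  define u where "u = t \<otimes> n"
  have uc: "u \<in> carrier G" using t nc u_def by simp
  have st: "\<sigma> t = -1" using t notN by auto
  have su: "\<sigma> u = -1" using t n(1) st inN by (simp add: u_def sig_mult)
  have sgn: "\<sigma> n = 1" using n inN by auto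
  have tu: "t \<noteq> u"
  proof
    assume "t = u"
    then have "n = \<one>" using t nc unfolding u_def by (metis l_cancel_one')
    then show False using n t by simp
  qed
  have stu: "star u = (s \<otimes> n) \<otimes> t'" using t nc sn by (simp add: u_def smul t'_def)
  have P: "(t \<otimes> star u = t' \<otimes> u \<and> u \<otimes> t' = star u \<otimes> t) \<or> (t \<otimes> star u = star u \<otimes> t \<and> u \<otimes> t' = t' \<otimes> u)"
    using pair[rule_format, OF t(1) uc tu] st su unfolding t'_def by auto
  have ts: "t \<otimes> s = s \<otimes> t" using zcomm[OF sZ t(1)] .
  have ns: "n \<otimes> s = s \<otimes> n" using zcomm[OF sZ nc] .
  have E1: "t \<otimes> star u = t' \<otimes> u"
  proof (rule ccontr)
    assume "t \<otimes> star u \<noteq> t' \<otimes> u"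
    then have "t \<otimes> star u = star u \<otimes> t" using P by auto
    moreover have "t \<otimes> star u = s \<otimes> ((t \<otimes> n) \<otimes> t')"
      unfolding stu using t nc t'c by (simp add: m_assoc[symmetric] ts)
    moreover have "star u \<otimes> t = s \<otimes> ((n \<otimes> t) \<otimes> t')"
      unfolding stu using t nc t'c by (simp add: m_assoc tt')
    ultimately have "s \<otimes> ((t \<otimes> n) \<otimes> t') = s \<otimes> ((n \<otimes> t) \<otimes> t')" by simp
    then have "t \<otimes> n = n \<otimes> t" using t nc t'c by simp
    then show False using n by simp
  qed
  have Q: "(n \<otimes> t' = t \<otimes> star n \<and> star n \<otimes> t = t' \<otimes> n) \<or> (n \<otimes> t' = t' \<otimes> n \<and> star n \<otimes> t = t \<otimes> star n)"
    using pair[rule_format, OF nc t(1)] sgn st unfolding t'_def by fastforce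
  show ?thesis
  proof (cases "n \<otimes> t' = t' \<otimes> n")
    case True
    have "t \<otimes> star u = s \<otimes> ((t \<otimes> t') \<otimes> n)"
      unfolding stu using t nc t'c by (simp add: m_assoc[symmetric] ts) (simp add: m_assoc True)
    moreover have "t' \<otimes> u = (t \<otimes> t') \<otimes> n" unfolding u_def using t nc t'c by (simp add: m_assoc[symmetric] tt')
    ultimately have "s \<otimes> ((t \<otimes> t') \<otimes> n) = (t \<otimes> t') \<otimes> n" using E1 by simp
    then have "s = \<one>" using t nc t'c by simp
    then show ?thesis using s1 by simp
  next
    case False
    then have B: "n \<otimes> t' = t \<otimes> (s \<otimes> n)" using Q sn by auto
    have "t \<otimes> star u = t \<otimes> (s \<otimes> (n \<otimes> t'))"
      unfolding stu using t nc t'c by (simp add: m_assoc)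
    also have "\<dots> = t \<otimes> (s \<otimes> (s \<otimes> (t \<otimes> n)))"
      unfolding B using t nc by (simp add: m_assoc[symmetric] ts)
    also have "\<dots> = t \<otimes> (t \<otimes> n)" using t nc s_s_x by simp
    finally have "t \<otimes> (t \<otimes> n) = t' \<otimes> (t \<otimes> n)" using E1 u_def by simp
    then show ?thesis using t nc t'c t'_def by simp
  qed
qed


end

context P1 begin
lemma star_formula: "g \<in> carrier G \<Longrightarrow> star g =
       (if (g \<in> N \<and> g \<in> Z) \<or> (g \<notin> N \<and> g \<notin> Z) then g else s \<otimes> g)"
  using starN2 claim2 claim4 by auto

lemma s_not: "x \<in> carrier G \<Longrightarrow> x = s \<otimes> x \<Longrightarrow> False"
  using s1 by simp

lemma LC: "non_abelian G \<Longrightarrow> LC_group G"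
  unfolding LC_group_def
proof (intro conjI ballI)
  assume "non_abelian G" then show "non_abelian G" .
  fix g h assume g: "g \<in> carrier G" and h: "h \<in> carrier G"
  show "g \<otimes> h = h \<otimes> g \<longleftrightarrow> (g \<in> Z \<or> h \<in> Z \<or> g \<otimes> h \<in> Z)"
  proof
    assume gh: "g \<otimes> h = h \<otimes> g"
    show "g \<in> Z \<or> h \<in> Z \<or> g \<otimes> h \<in> Z"
    proof (rule ccontr)
      assume nz: "\<not> (g \<in> Z \<or> h \<in> Z \<or> g \<otimes> h \<in> Z)"
      have ghc: "g \<otimes> h \<in> carrier G" using g h by simp
      have sgh: "star (g \<otimes> h) = star h \<otimes> star g" using g h smul by simp
      have sg: "star g = (if g \<in> N then s \<otimes> g else g)" using star_formula[OF g] nz by auto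
      have sh: "star h = (if h \<in> N then s \<otimes> h else h)" using star_formula[OF h] nz by auto
      have sgh2: "star (g \<otimes> h) = (if g \<otimes> h \<in> N then s \<otimes> (g \<otimes> h) else g \<otimes> h)"
        using star_formula[OF ghc] nz by auto
      have gs: "g \<otimes> s = s \<otimes> g" "h \<otimes> s = s \<otimes> h" using zcomm[OF sZ] g h by auto
      show False
      proof (cases "g \<in> N"; cases "h \<in> N")
        assume gN: "g \<in> N" and hN: "h \<in> N"
        have "g \<in> grp_center H \<or> h \<in> grp_center H \<or> g \<otimes> h \<in> grp_center H"
          using LCH gN hN gh unfolding LC_group_def by auto
        then show False using nz ZH_Z by auto
      next
        assume gN: "g \<in> N" and hN: "h \<notin> N"
        have "g \<otimes> h \<notin> N" using gN hN g h notN[of h] notN[of "g \<otimes> h"] inN by (simp add: sig_mult)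
        then have "g \<otimes> h = h \<otimes> (s \<otimes> g)" using sgh sgh2 sg sh gN hN by simp
        also have "\<dots> = s \<otimes> (g \<otimes> h)" using g h gh by (simp add: m_assoc[symmetric] gs)
        finally show False using s_not ghc by blast
      next
        assume gN: "g \<notin> N" and hN: "h \<in> N"
        have "g \<otimes> h \<notin> N" using gN hN g h notN[of g] notN[of "g \<otimes> h"] inN by (simp add: sig_mult)
        then have "g \<otimes> h = s \<otimes> h \<otimes> g" using sgh sgh2 sg sh gN hN by simp
        also have "\<dots> = s \<otimes> (g \<otimes> h)" using g h gh by (simp add: m_assoc)
        finally show False using s_not ghc by blast
      next
        assume gN: "g \<notin> N" and hN: "h \<notin> N"
        have "g \<otimes> h \<in> N" using gN hN g h notN[of g] notN[of h] inN by (simp add: sig_mult)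
        then have "s \<otimes> (g \<otimes> h) = h \<otimes> g" using sgh sgh2 sg sh gN hN by simp
        then show False using s_not ghc gh by simp
      qed
    qed
  next
    assume "g \<in> Z \<or> h \<in> Z \<or> g \<otimes> h \<in> Z"
    then show "g \<otimes> h = h \<otimes> g"
    proof (elim disjE)
      assume "g \<otimes> h \<in> Z"
      then have "(g \<otimes> h) \<otimes> g = g \<otimes> (g \<otimes> h)" using g zcomm[of "g \<otimes> h" g] by simp
      then show ?thesis using g h by (simp add: m_assoc)
    next
      assume "g \<in> Z" then show ?thesis using zcomm[of g h] h by simp
    next
      assume "h \<in> Z" then show ?thesis using zcomm[of h g] g by simp
    qed
  qed
qed

end

theorem proposition1:
  fixes G :: "('g, 'b) monoid_scheme"
    and star :: "'g \<Rightarrow> 'g" and \<sigma> :: "'g \<Rightarrow> int" and s :: 'g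
  assumes "infinite (UNIV :: 'f::field set)"
    and "(2::'f) \<noteq> 0"
    and "group G"
    and "non_abelian G"
    and "group_involution G star"
    and "orientation G \<sigma>"
    and "\<exists>g\<in>carrier G. \<sigma> g = -1"
    and "\<forall>g\<in>carrier G. g \<otimes>\<^bsub>G\<^esub> star g \<in> orient_kernel G \<sigma>"
    and "grp_alg_normal TYPE('f) G \<sigma> star"
    and "SLC_group (G\<lparr>carrier := orient_kernel G \<sigma>\<rparr>) star s"
  shows "LC_group G \<and>
    (\<forall>g\<in>carrier G. star g =
       (if (g \<in> orient_kernel G \<sigma> \<and> g \<in> grp_center G) \<or>
           (g \<notin> orient_kernel G \<sigma> \<and> g \<notin> grp_center G)
        then g else s \<otimes>\<^bsub>G\<^esub> g))"
proof -
  have sig: "\<forall>g\<in>carrier G. \<sigma> (star g) = \<sigma> g"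
  proof
    fix g assume g: "g \<in> carrier G"
    have sc: "star g \<in> carrier G" using assms(5) g unfolding group_involution_def by auto
    have "\<sigma> (g \<otimes>\<^bsub>G\<^esub> star g) = 1" using assms(8) g unfolding orient_kernel_def by auto
    moreover have "\<sigma> (g \<otimes>\<^bsub>G\<^esub> star g) = \<sigma> g * \<sigma> (star g)" using assms(6) g sc unfolding orientation_def by auto
    moreover have "\<sigma> g = 1 \<or> \<sigma> g = -1" "\<sigma> (star g) = 1 \<or> \<sigma> (star g) = -1"
      using assms(6) g sc unfolding orientation_def by auto
    ultimately show "\<sigma> (star g) = \<sigma> g" by auto
  qed
  interpret P1 G star \<sigma> s
  proof (rule P1.intro[OF assms(3)], unfold_locales)
    show "group_involution G star" "orientation G \<sigma>" "\<exists>g\<in>carrier G. \<sigma> g = -1"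
      "\<forall>g\<in>carrier G. g \<otimes>\<^bsub>G\<^esub> star g \<in> orient_kernel G \<sigma>"
      "SLC_group (G\<lparr>carrier := orient_kernel G \<sigma>\<rparr>) star s" using assms by auto
    show "\<forall>g\<in>carrier G. g \<otimes>\<^bsub>G\<^esub> star g = star g \<otimes>\<^bsub>G\<^esub> g"
      using normal_single[OF assms(3,5,6) sig assms(9)] by blast
    show "\<forall>g\<in>carrier G. \<forall>h\<in>carrier G. g \<noteq> h \<longrightarrow>
       (\<sigma> g = \<sigma> h \<longrightarrow> (g \<otimes>\<^bsub>G\<^esub> star h = star g \<otimes>\<^bsub>G\<^esub> h \<and> h \<otimes>\<^bsub>G\<^esub> star g = star h \<otimes>\<^bsub>G\<^esub> g) \<or> (g \<otimes>\<^bsub>G\<^esub> star h = star h \<otimes>\<^bsub>G\<^esub> g \<and> h \<otimes>\<^bsub>G\<^esub> star g = star g \<otimes>\<^bsub>G\<^esub> h))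
       \<and> (\<sigma> g \<noteq> \<sigma> h \<longrightarrow> (g \<otimes>\<^bsub>G\<^esub> star h = h \<otimes>\<^bsub>G\<^esub> star g \<and> star g \<otimes>\<^bsub>G\<^esub> h = star h \<otimes>\<^bsub>G\<^esub> g) \<or> (g \<otimes>\<^bsub>G\<^esub> star h = star h \<otimes>\<^bsub>G\<^esub> g \<and> star g \<otimes>\<^bsub>G\<^esub> h = h \<otimes>\<^bsub>G\<^esub> star g))"
      using normal_pair[OF assms(3,5,6) sig assms(9,2)] by blast
  qed
  show ?thesis using LC[OF assms(4)] star_formula by blast
qed

end
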